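(* Let $R$ be an associative ring with identity and $M$ a left $R$-module which is projective in $\sigma[M]$. If $M$ has Krull dimension, then $LgSpec(M)$ is weakly scattered.
   Context: Krull dimension of a module is in the sense of Gordon–Robson (the deviation of its lattice of submodules). $\Lambda^{fi}(M)$ is the set of fully invariant submodules of $M$. For $N,L\leq M$, $N_ML=\sum\{f(N)\mid f\in\mathrm{Hom}_R(M,L)\}$. $LgSpec(M)$ is the set of submodules $P\neq M$ such that for all $N,L\in\Lambda^{fi}(M)$, $N_ML\subseteq P$ implies $N\subseteq P$ or $L\subseteq P$, with the topology whose open sets are $\{P\in LgSpec(M)\mid N\nsubseteq P\}$, $N\in\Lambda^{fi}(M)$. A topological space $S$ is weakly scattered if every non-empty closed subset $F$ contains a point $x$ such that there is an open set $U$ with $x\in U\cap F\subseteq\overline{\{x\}}$. *)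

theory Defs
  imports "HOL-Algebra.Module" "HOL-Analysis.Abstract_Topology"
begin

text \<open>HOL-Algebra's locale module requires a commutative ring, so we define
left modules over an arbitrary ring R (HOL-Algebra's ring: associative, with identity).\<close>

locale lmodule = R?: ring R + M?: abelian_group M
  for R :: "('r, 'c) ring_scheme" and M :: "('r, 'a, 'd) module_scheme" +
  assumes lsmult_closed:
      "\<lbrakk>a \<in> carrier R; x \<in> carrier M\<rbrakk> \<Longrightarrow> a \<odot>\<^bsub>M\<^esub> x \<in> carrier M"
    and lsmult_l_distr:
      "\<lbrakk>a \<in> carrier R; b \<in> carrier R; x \<in> carrier M\<rbrakk> \<Longrightarrow>
       (a \<oplus>\<^bsub>R\<^esub> b) \<odot>\<^bsub>M\<^esub> x = a \<odot>\<^bsub>M\<^esub> x \<oplus>\<^bsub>M\<^esub> b \<odot>\<^bsub>M\<^esub> x"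
    and lsmult_r_distr:
      "\<lbrakk>a \<in> carrier R; x \<in> carrier M; y \<in> carrier M\<rbrakk> \<Longrightarrow>
       a \<odot>\<^bsub>M\<^esub> (x \<oplus>\<^bsub>M\<^esub> y) = a \<odot>\<^bsub>M\<^esub> x \<oplus>\<^bsub>M\<^esub> a \<odot>\<^bsub>M\<^esub> y"
    and lsmult_assoc:
      "\<lbrakk>a \<in> carrier R; b \<in> carrier R; x \<in> carrier M\<rbrakk> \<Longrightarrow>
       (a \<otimes>\<^bsub>R\<^esub> b) \<odot>\<^bsub>M\<^esub> x = a \<odot>\<^bsub>M\<^esub> (b \<odot>\<^bsub>M\<^esub> x)"
    and lsmult_one:
      "x \<in> carrier M \<Longrightarrow> \<one>\<^bsub>R\<^esub> \<odot>\<^bsub>M\<^esub> x = x"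

definition mod_hom :: "('r, 'c) ring_scheme \<Rightarrow> ('r, 'a, 'd) module_scheme
      \<Rightarrow> ('r, 'b, 'e) module_scheme \<Rightarrow> ('a \<Rightarrow> 'b) set" where
  "mod_hom R M N = {f. f \<in> carrier M \<rightarrow> carrier N \<and>
     (\<forall>x\<in>carrier M. \<forall>y\<in>carrier M. f (x \<oplus>\<^bsub>M\<^esub> y) = f x \<oplus>\<^bsub>N\<^esub> f y) \<and>
     (\<forall>r\<in>carrier R. \<forall>x\<in>carrier M. f (r \<odot>\<^bsub>M\<^esub> x) = r \<odot>\<^bsub>N\<^esub> f x)}"

text \<open>Submodule generated by a subset (= sum of submodules when S is a union of submodules).\<close>
definition gen_submodule :: "('r, 'c) ring_scheme \<Rightarrow> ('r, 'a, 'd) module_scheme \<Rightarrow> 'a set \<Rightarrow> 'a set" where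
  "gen_submodule R M S = \<Inter>{H. submodule H R M \<and> S \<subseteq> H}"

definition M_generated :: "('r, 'c) ring_scheme \<Rightarrow> ('r, 'a, 'd) module_scheme
      \<Rightarrow> ('r, 'b, 'e) module_scheme \<Rightarrow> bool" where
  "M_generated R M K \<longleftrightarrow>
     gen_submodule R K (\<Union>{f ` carrier M | f. f \<in> mod_hom R M K}) = carrier K"

text \<open>The modules of \<sigma>[M] are taken with carriers in the type
  ('a + 'r) list, whose cardinality bounds all modules relevant for the lifting
  property.\<close>
definition in_sigma :: "('r, 'c) ring_scheme \<Rightarrow> ('r, 'a, 'd) module_scheme
      \<Rightarrow> ('r, ('a + 'r) list) module \<Rightarrow> bool" where
  "in_sigma R M N \<longleftrightarrow> lmodule R N \<and>
     (\<exists>K :: ('r, ('a + 'r) list) module. lmodule R K \<and> M_generated R M K \<and>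
        (\<exists>\<iota>\<in>mod_hom R N K. inj_on \<iota> (carrier N)))"

definition projective_in_sigma :: "('r, 'c) ring_scheme \<Rightarrow> ('r, 'a, 'd) module_scheme \<Rightarrow> bool" where
  "projective_in_sigma R M \<longleftrightarrow>
     (\<forall>N L. in_sigma R M N \<longrightarrow> in_sigma R M L \<longrightarrow>
        (\<forall>g\<in>mod_hom R N L. g ` carrier N = carrier L \<longrightarrow>
          (\<forall>f\<in>mod_hom R M L. \<exists>h\<in>mod_hom R M N. \<forall>m\<in>carrier M. g (h m) = f m)))"

text \<open>This is the least family of intervals containing the trivial intervals
  and containing [a,b] whenever every descending chain b \<supseteq> x0 \<supseteq> x1 \<supseteq> ... \<supseteq> a
  has all but finitely many factors [x(i+1), x i] in the family (transfinite
  construction of the deviation).\<close>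
inductive has_dev :: "('r, 'c) ring_scheme \<Rightarrow> ('r, 'a, 'd) module_scheme \<Rightarrow> 'a set \<Rightarrow> 'a set \<Rightarrow> bool"
  for R M where
  "\<lbrakk>submodule a R M; submodule b R M; a \<subseteq> b;
    a = b \<or>
    (\<forall>x :: nat \<Rightarrow> 'a set.
       (\<forall>i. submodule (x i) R M \<and> a \<subseteq> x i \<and> x i \<subseteq> b \<and> x (Suc i) \<subseteq> x i) \<longrightarrow>
       (\<exists>n. \<forall>i\<ge>n. has_dev R M (x (Suc i)) (x i)))\<rbrakk>
   \<Longrightarrow> has_dev R M a b"

definition has_krull_dim :: "('r, 'c) ring_scheme \<Rightarrow> ('r, 'a, 'd) module_scheme \<Rightarrow> bool" where
  "has_krull_dim R M \<longleftrightarrow> has_dev R M {\<zero>\<^bsub>M\<^esub>} (carrier M)"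

definition fully_invariant :: "('r, 'c) ring_scheme \<Rightarrow> ('r, 'a, 'd) module_scheme \<Rightarrow> 'a set \<Rightarrow> bool" where
  "fully_invariant R M N \<longleftrightarrow> submodule N R M \<and> (\<forall>f\<in>mod_hom R M M. f ` N \<subseteq> N)"

text \<open>N_M L = \<Sum>{f(N) | f \<in> Hom_R(M,L)}; homomorphisms M \<rightarrow> L are the R-linear
  maps M \<rightarrow> M with image in L.\<close>
definition mprod :: "('r, 'c) ring_scheme \<Rightarrow> ('r, 'a, 'd) module_scheme \<Rightarrow> 'a set \<Rightarrow> 'a set \<Rightarrow> 'a set" where
  "mprod R M N L = gen_submodule R M
     (\<Union>{f ` N | f. f \<in> mod_hom R M M \<and> f ` carrier M \<subseteq> L})"

definition LgSpec :: "('r, 'c) ring_scheme \<Rightarrow> ('r, 'a, 'd) module_scheme \<Rightarrow> 'a set set" where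
  "LgSpec R M = {P. submodule P R M \<and> P \<noteq> carrier M \<and>
     (\<forall>N L. fully_invariant R M N \<longrightarrow> fully_invariant R M L \<longrightarrow>
        mprod R M N L \<subseteq> P \<longrightarrow> N \<subseteq> P \<or> L \<subseteq> P)}"

definition LgSpec_top :: "('r, 'c) ring_scheme \<Rightarrow> ('r, 'a, 'd) module_scheme \<Rightarrow> 'a set topology" where
  "LgSpec_top R M = topology (\<lambda>U. \<exists>N. fully_invariant R M N \<and> U = {P \<in> LgSpec R M. \<not> N \<subseteq> P})"

definition weakly_scattered :: "'a topology \<Rightarrow> bool" where
  "weakly_scattered T \<longleftrightarrow>
     (\<forall>F. closedin T F \<and> F \<noteq> {} \<longrightarrow>
        (\<exists>x\<in>F. \<exists>U. openin T U \<and> x \<in> U \<and> U \<inter> F \<subseteq> T closure_of {x}))"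

end

theory Submission
  imports Defs
begin


context lmodule begin

lemma submod_intro:
  assumes "H \<subseteq> carrier M" "\<zero>\<^bsub>M\<^esub> \<in> H"
    "\<And>x y. x \<in> H \<Longrightarrow> y \<in> H \<Longrightarrow> x \<oplus>\<^bsub>M\<^esub> y \<in> H"
    "\<And>x. x \<in> H \<Longrightarrow> \<ominus>\<^bsub>M\<^esub> x \<in> H"
    "\<And>a x. a \<in> carrier R \<Longrightarrow> x \<in> H \<Longrightarrow> a \<odot>\<^bsub>M\<^esub> x \<in> H"
  shows "submodule H R M"
  apply (intro submodule.intro subgroup.intro submodule_axioms.intro)
  using assms by (simp_all add: a_inv_def)

lemma submod_D:
  assumes "submodule H R M"
  shows "H \<subseteq> carrier M" "\<zero>\<^bsub>M\<^esub> \<in> H"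
    "\<And>x y. x \<in> H \<Longrightarrow> y \<in> H \<Longrightarrow> x \<oplus>\<^bsub>M\<^esub> y \<in> H"
    "\<And>x. x \<in> H \<Longrightarrow> \<ominus>\<^bsub>M\<^esub> x \<in> H"
    "\<And>a x. a \<in> carrier R \<Longrightarrow> x \<in> H \<Longrightarrow> a \<odot>\<^bsub>M\<^esub> x \<in> H"
  using subgroup.subset[OF submodule.axioms(1)[OF assms]]
    subgroup.one_closed[OF submodule.axioms(1)[OF assms]]
    subgroup.m_closed[OF submodule.axioms(1)[OF assms]]
    subgroup.m_inv_closed[OF submodule.axioms(1)[OF assms]]
    submodule.smult_closed[OF assms]
  by (auto simp: a_inv_def)

lemma submod_Inter:
  assumes "\<H> \<noteq> {}" "\<And>H. H \<in> \<H> \<Longrightarrow> submodule H R M"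
  shows "submodule (\<Inter>\<H>) R M"
proof -
  obtain H0 where "H0 \<in> \<H>" using assms by auto
  show ?thesis
  proof (rule submod_intro)
    show "\<Inter>\<H> \<subseteq> carrier M" using submod_D(1)[OF assms(2)] \<open>H0 \<in> \<H>\<close> by blast
    show "\<zero>\<^bsub>M\<^esub> \<in> \<Inter>\<H>" using submod_D(2)[OF assms(2)] by blast
    show "\<And>x y. x \<in> \<Inter>\<H> \<Longrightarrow> y \<in> \<Inter>\<H> \<Longrightarrow> x \<oplus>\<^bsub>M\<^esub> y \<in> \<Inter>\<H>"
      using submod_D(3)[OF assms(2)] by blast
    show "\<And>x. x \<in> \<Inter>\<H> \<Longrightarrow> \<ominus>\<^bsub>M\<^esub> x \<in> \<Inter>\<H>"
      using submod_D(4)[OF assms(2)] by blast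
    show "\<And>a x. a \<in> carrier R \<Longrightarrow> x \<in> \<Inter>\<H> \<Longrightarrow> a \<odot>\<^bsub>M\<^esub> x \<in> \<Inter>\<H>"
      using submod_D(5)[OF assms(2)] by blast
  qed
qed

lemma submod_Int: "submodule A R M \<Longrightarrow> submodule B R M \<Longrightarrow> submodule (A \<inter> B) R M"
  using submod_Inter[of "{A,B}"] by auto

lemma carrier_submod: "submodule (carrier M) R M"
  by (rule submod_intro) (auto simp: lsmult_closed)

lemma smult_zero: "a \<in> carrier R \<Longrightarrow> a \<odot>\<^bsub>M\<^esub> \<zero>\<^bsub>M\<^esub> = \<zero>\<^bsub>M\<^esub>"
proof -
  assume a: "a \<in> carrier R"
  have "a \<odot>\<^bsub>M\<^esub> \<zero>\<^bsub>M\<^esub> = a \<odot>\<^bsub>M\<^esub> \<zero>\<^bsub>M\<^esub> \<oplus>\<^bsub>M\<^esub> a \<odot>\<^bsub>M\<^esub> \<zero>\<^bsub>M\<^esub>"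
    using lsmult_r_distr[OF a, of "\<zero>\<^bsub>M\<^esub>" "\<zero>\<^bsub>M\<^esub>"] by simp
  then show ?thesis using lsmult_closed[OF a M.zero_closed]
    by (metis M.add.l_cancel_one M.zero_closed)
qed

lemma zero_submod: "submodule {\<zero>\<^bsub>M\<^esub>} R M"
  by (rule submod_intro) (auto simp: smult_zero)

lemma gen_props:
  assumes "S \<subseteq> carrier M"
  shows "submodule (gen_submodule R M S) R M" "S \<subseteq> gen_submodule R M S"
    "\<And>H. submodule H R M \<Longrightarrow> S \<subseteq> H \<Longrightarrow> gen_submodule R M S \<subseteq> H"
proof -
  show "submodule (gen_submodule R M S) R M" unfolding gen_submodule_def
    apply (rule submod_Inter) using assms carrier_submod by auto
qed (auto simp: gen_submodule_def)

lemma hom_props: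
  assumes "f \<in> mod_hom R M M"
  shows "\<And>x. x \<in> carrier M \<Longrightarrow> f x \<in> carrier M" "f \<zero>\<^bsub>M\<^esub> = \<zero>\<^bsub>M\<^esub>"
    "\<And>x. x \<in> carrier M \<Longrightarrow> f (\<ominus>\<^bsub>M\<^esub> x) = \<ominus>\<^bsub>M\<^esub> f x"
    "\<And>x y. x \<in> carrier M \<Longrightarrow> y \<in> carrier M \<Longrightarrow> f (x \<oplus>\<^bsub>M\<^esub> y) = f x \<oplus>\<^bsub>M\<^esub> f y"
    "\<And>a x. a \<in> carrier R \<Longrightarrow> x \<in> carrier M \<Longrightarrow> f (a \<odot>\<^bsub>M\<^esub> x) = a \<odot>\<^bsub>M\<^esub> f x"
proof -
  have c: "\<And>x. x \<in> carrier M \<Longrightarrow> f x \<in> carrier M" using assms by (auto simp: mod_hom_def)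
  have add: "\<And>x y. x \<in> carrier M \<Longrightarrow> y \<in> carrier M \<Longrightarrow> f (x \<oplus>\<^bsub>M\<^esub> y) = f x \<oplus>\<^bsub>M\<^esub> f y"
    using assms by (auto simp: mod_hom_def)
  have z: "f \<zero>\<^bsub>M\<^esub> = \<zero>\<^bsub>M\<^esub>"
    using add[of "\<zero>\<^bsub>M\<^esub>" "\<zero>\<^bsub>M\<^esub>"] c[of "\<zero>\<^bsub>M\<^esub>"]
    by (metis M.add.l_cancel_one M.l_zero M.zero_closed)
  show "\<And>x. x \<in> carrier M \<Longrightarrow> f (\<ominus>\<^bsub>M\<^esub> x) = \<ominus>\<^bsub>M\<^esub> f x"
  proof -
    fix x assume x: "x \<in> carrier M"
    have "f x \<oplus>\<^bsub>M\<^esub> f (\<ominus>\<^bsub>M\<^esub> x) = \<zero>\<^bsub>M\<^esub>"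
      using add[of x "\<ominus>\<^bsub>M\<^esub> x"] x z by (simp add: M.r_neg)
    then show "f (\<ominus>\<^bsub>M\<^esub> x) = \<ominus>\<^bsub>M\<^esub> f x"
      by (metis M.a_inv_closed M.add.inv_equality M.add.m_comm c x)
  qed
  show "\<And>a x. a \<in> carrier R \<Longrightarrow> x \<in> carrier M \<Longrightarrow> f (a \<odot>\<^bsub>M\<^esub> x) = a \<odot>\<^bsub>M\<^esub> f x"
    using assms by (auto simp: mod_hom_def)
  show "\<And>x. x \<in> carrier M \<Longrightarrow> f x \<in> carrier M" by (rule c)
  show "f \<zero>\<^bsub>M\<^esub> = \<zero>\<^bsub>M\<^esub>" by (rule z)
  show "\<And>x y. x \<in> carrier M \<Longrightarrow> y \<in> carrier M \<Longrightarrow> f (x \<oplus>\<^bsub>M\<^esub> y) = f x \<oplus>\<^bsub>M\<^esub> f y" by (rule add)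
qed

end



lemma dev_no_bad:
  assumes "has_dev R M a b"
    and "\<And>a b. Bad a b \<Longrightarrow> a \<noteq> b \<and> (\<exists>x. (\<forall>i. submodule (x i) R M \<and> a \<subseteq> x i \<and> x i \<subseteq> b \<and> x (Suc i) \<subseteq> x i) \<and> (\<forall>i. Bad (x (Suc i)) (x i)))"
  shows "\<not> Bad a b"
  using assms(1)
proof induction
  case (1 a b)
  show ?case
  proof
    assume B: "Bad a b"
    from assms(2)[OF B] obtain x where ne: "a \<noteq> b" and
      x: "\<forall>i. submodule (x i) R M \<and> a \<subseteq> x i \<and> x i \<subseteq> b \<and> x (Suc i) \<subseteq> x i"
      and bx: "\<forall>i. Bad (x (Suc i)) (x i)" by blast
    from 1(4) ne x obtain n where "\<forall>i\<ge>n. has_dev R M (x (Suc i)) (x i) \<and> \<not> Bad (x (Suc i)) (x i)"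
      by blast
    then show False using bx by auto
  qed
qed

definition Dset :: "('r, 'c) ring_scheme \<Rightarrow> ('r, 'a, 'd) module_scheme \<Rightarrow> 'a set \<Rightarrow> 'a set set" where
  "Dset R M N = {P \<in> LgSpec R M. \<not> N \<subseteq> P}"

context lmodule begin

abbreviation FI where "FI N \<equiv> fully_invariant R M N"

lemma fi_sub: "FI N \<Longrightarrow> submodule N R M"
  by (simp add: fully_invariant_def)

lemma fi_gen:
  assumes S: "S \<subseteq> carrier M" and inv: "\<And>f. f \<in> mod_hom R M M \<Longrightarrow> f ` S \<subseteq> S"
  shows "FI (gen_submodule R M S)"
proof -
  let ?G = "gen_submodule R M S"
  note G = gen_props[OF S]
  have "f ` ?G \<subseteq> ?G" if f: "f \<in> mod_hom R M M" for f
  proof -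
    let ?H = "{x \<in> ?G. f x \<in> ?G}"
    note GD = submod_D[OF G(1)]
    note h = hom_props[OF f]
    have "submodule ?H R M"
    proof (rule submod_intro)
      show "?H \<subseteq> carrier M" using GD(1) by blast
      show "\<zero>\<^bsub>M\<^esub> \<in> ?H" using GD(2) h(2) by simp
      show "x \<oplus>\<^bsub>M\<^esub> y \<in> ?H" if "x \<in> ?H" "y \<in> ?H" for x y
        using that GD(1,3) h(4) by (simp add: subset_iff)
      show "\<ominus>\<^bsub>M\<^esub> x \<in> ?H" if "x \<in> ?H" for x
        using that GD(1,4) h(3) by (simp add: subset_iff)
      show "a \<odot>\<^bsub>M\<^esub> x \<in> ?H" if "a \<in> carrier R" "x \<in> ?H" for a x
        using that GD(1,5) h(5) by (simp add: subset_iff)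
    qed
    moreover have "S \<subseteq> ?H" using G(2) inv[OF f] by blast
    ultimately have "?G \<subseteq> ?H" using G(3) by blast
    then show ?thesis by blast
  qed
  then show ?thesis using G(1) by (simp add: fully_invariant_def)
qed

lemma fi_Int: "FI A \<Longrightarrow> FI B \<Longrightarrow> FI (A \<inter> B)"
  unfolding fully_invariant_def using submod_Int by blast

lemma fi_zero: "FI {\<zero>\<^bsub>M\<^esub>}"
  unfolding fully_invariant_def using zero_submod hom_props(2) by blast

lemma fi_carrier: "FI (carrier M)"
  unfolding fully_invariant_def using carrier_submod hom_props(1) by blast

lemma fi_Union:
  assumes "\<And>N. N \<in> \<N> \<Longrightarrow> FI N"
  shows "FI (gen_submodule R M (\<Union>\<N>))"
proof (rule fi_gen)
  show "\<Union>\<N> \<subseteq> carrier M" using assms submod_D(1)[OF fi_sub] by blast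
  show "f ` \<Union>\<N> \<subseteq> \<Union>\<N>" if "f \<in> mod_hom R M M" for f
    using assms that unfolding fully_invariant_def by blast
qed

lemma fi_sum: "FI A \<Longrightarrow> FI B \<Longrightarrow> FI (gen_submodule R M (A \<union> B))"
  using fi_Union[of "{A,B}"] by auto

lemma mprod_sub:
  assumes A: "FI A" and B: "submodule B R M"
  shows "mprod R M A B \<subseteq> A \<inter> B"
proof -
  let ?U = "\<Union>{f ` A | f. f \<in> mod_hom R M M \<and> f ` carrier M \<subseteq> B}"
  have AC: "A \<subseteq> carrier M" using submod_D(1)[OF fi_sub[OF A]] .
  have U: "?U \<subseteq> A \<inter> B"
  proof
    fix y assume "y \<in> ?U"
    then obtain f where f: "f \<in> mod_hom R M M" "f ` carrier M \<subseteq> B" "y \<in> f ` A" by blast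
    have "f ` A \<subseteq> A" using A f(1) unfolding fully_invariant_def by blast
    moreover have "f ` A \<subseteq> B" using f(2) AC by blast
    ultimately show "y \<in> A \<inter> B" using f(3) by blast
  qed
  have "?U \<subseteq> carrier M" using U AC by blast
  from gen_props(3)[OF this submod_Int[OF fi_sub[OF A] B] U]
  show ?thesis unfolding mprod_def .
qed

lemma LS_D: "P \<in> LgSpec R M \<Longrightarrow> submodule P R M \<and> P \<subseteq> carrier M \<and> P \<noteq> carrier M"
proof -
  assume "P \<in> LgSpec R M"
  then have "submodule P R M" "P \<noteq> carrier M" by (simp_all add: LgSpec_def)
  then show ?thesis using submod_D(1) by simp
qed

lemma LS_prime: "P \<in> LgSpec R M \<Longrightarrow> FI N \<Longrightarrow> FI L \<Longrightarrow> mprod R M N L \<subseteq> P \<Longrightarrow> N \<subseteq> P \<or> L \<subseteq> P"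
  by (simp add: LgSpec_def)

lemma prime_int:
  assumes P: "P \<in> LgSpec R M" and A: "FI A" and B: "FI B" and nA: "\<not> A \<subseteq> P" and nB: "\<not> B \<subseteq> P"
  shows "\<not> A \<inter> B \<subseteq> P"
proof
  assume "A \<inter> B \<subseteq> P"
  then have "mprod R M A B \<subseteq> P" using mprod_sub[OF A fi_sub[OF B]] by blast
  then show False using LS_prime[OF P A B] nA nB by blast
qed

lemma istop: "istopology (\<lambda>U. \<exists>N. FI N \<and> U = Dset R M N)"
  unfolding istopology_def
proof (intro conjI allI impI)
  fix S T assume "\<exists>N. FI N \<and> S = Dset R M N" "\<exists>N. FI N \<and> T = Dset R M N"
  then obtain A B where A: "FI A" "S = Dset R M A" and B: "FI B" "T = Dset R M B" by blast
  have "S \<inter> T = Dset R M (A \<inter> B)"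
    unfolding A(2) B(2) Dset_def using prime_int[OF _ A(1) B(1)] by auto
  then show "\<exists>N. FI N \<and> S \<inter> T = Dset R M N" using fi_Int[OF A(1) B(1)] by blast
next
  fix \<K> assume K: "\<forall>K\<in>\<K>. \<exists>N. FI N \<and> K = Dset R M N"
  define \<N> where "\<N> = {N. FI N \<and> Dset R M N \<in> \<K>}"
  have fiN: "\<And>N. N \<in> \<N> \<Longrightarrow> FI N" unfolding \<N>_def by blast
  have UC: "\<Union>\<N> \<subseteq> carrier M"
  proof
    fix x assume "x \<in> \<Union>\<N>"
    then obtain N where "N \<in> \<N>" "x \<in> N" by blast
    then show "x \<in> carrier M" using submod_D(1)[OF fi_sub[OF fiN]] by blast
  qed
  have sub1: "P \<in> Dset R M (gen_submodule R M (\<Union>\<N>))" if "P \<in> \<Union>\<K>" for P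
  proof -
    from that obtain K0 where K0: "K0 \<in> \<K>" "P \<in> K0" by (rule UnionE)
    from K K0(1) obtain N where N: "FI N" "K0 = Dset R M N" by blast
    have "N \<in> \<N>" unfolding \<N>_def using N K0(1) by simp
    then have "N \<subseteq> gen_submodule R M (\<Union>\<N>)" using gen_props(2)[OF UC] by blast
    then show ?thesis using K0(2) N(2) unfolding Dset_def by blast
  qed
  have sub2: "P \<in> \<Union>\<K>" if P: "P \<in> Dset R M (gen_submodule R M (\<Union>\<N>))" for P
  proof -
    have PL: "P \<in> LgSpec R M" and nP: "\<not> gen_submodule R M (\<Union>\<N>) \<subseteq> P"
      using P unfolding Dset_def by simp_all
    have "\<exists>N\<in>\<N>. \<not> N \<subseteq> P"
    proof (rule ccontr)
      assume "\<not> ?thesis"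
      then have "\<Union>\<N> \<subseteq> P" by blast
      then have "gen_submodule R M (\<Union>\<N>) \<subseteq> P"
        using gen_props(3)[OF UC] LS_D[OF PL] by blast
      then show False using nP by blast
    qed
    then obtain N where N: "N \<in> \<N>" "\<not> N \<subseteq> P" by blast
    then have "Dset R M N \<in> \<K>" "P \<in> Dset R M N" using PL unfolding \<N>_def Dset_def by simp_all
    then show ?thesis by blast
  qed
  have "\<Union>\<K> = Dset R M (gen_submodule R M (\<Union>\<N>))"
    using sub1 sub2 by blast
  then show "\<exists>N. FI N \<and> \<Union>\<K> = Dset R M N" using fi_Union[OF fiN] by blast
qed

lemma openin_LS: "openin (LgSpec_top R M) U \<longleftrightarrow> (\<exists>N. FI N \<and> U = Dset R M N)"
proof -
  have "LgSpec_top R M = topology (\<lambda>U. \<exists>N. FI N \<and> U = Dset R M N)"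
    unfolding LgSpec_top_def Dset_def by simp
  then show ?thesis using topology_inverse'[OF istop] by simp
qed

lemma topspace_LS: "topspace (LgSpec_top R M) = LgSpec R M"
proof -
  have "Dset R M (carrier M) = LgSpec R M" using LS_D unfolding Dset_def by blast
  then show ?thesis unfolding topspace_def openin_LS using fi_carrier
    unfolding Dset_def by blast
qed

lemma closure_LS:
  assumes "x \<in> LgSpec R M"
  shows "LgSpec_top R M closure_of {x} = {y \<in> LgSpec R M. \<forall>K. FI K \<longrightarrow> \<not> K \<subseteq> y \<longrightarrow> \<not> K \<subseteq> x}"
proof (rule equalityI; rule subsetI)
  fix y assume "y \<in> LgSpec_top R M closure_of {x}"
  then have y: "y \<in> LgSpec R M" "\<And>T. y \<in> T \<Longrightarrow> openin (LgSpec_top R M) T \<Longrightarrow> x \<in> T"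
    unfolding closure_of_def topspace_LS by auto
  have "\<not> K \<subseteq> x" if "FI K" "\<not> K \<subseteq> y" for K
  proof -
    have "y \<in> Dset R M K" using y(1) that(2) unfolding Dset_def by simp
    moreover have "openin (LgSpec_top R M) (Dset R M K)" using openin_LS that(1) by blast
    ultimately have "x \<in> Dset R M K" using y(2) by blast
    then show ?thesis unfolding Dset_def by simp
  qed
  then show "y \<in> {y \<in> LgSpec R M. \<forall>K. FI K \<longrightarrow> \<not> K \<subseteq> y \<longrightarrow> \<not> K \<subseteq> x}" using y(1) by blast
next
  fix y assume "y \<in> {y \<in> LgSpec R M. \<forall>K. FI K \<longrightarrow> \<not> K \<subseteq> y \<longrightarrow> \<not> K \<subseteq> x}"
  then have y: "y \<in> LgSpec R M" "\<And>K. FI K \<Longrightarrow> \<not> K \<subseteq> y \<Longrightarrow> \<not> K \<subseteq> x" by auto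
  have "x \<in> T" if yT: "y \<in> T" and oT: "openin (LgSpec_top R M) T" for T
  proof -
    obtain K where K: "FI K" "T = Dset R M K" using oT openin_LS by blast
    then show ?thesis using yT y(2)[OF K(1)] assms unfolding Dset_def by auto
  qed
  then show "y \<in> LgSpec_top R M closure_of {x}"
    unfolding closure_of_def topspace_LS using y(1) by auto
qed

end



definition FF where "FF R M N0 = {P \<in> LgSpec R M. N0 \<subseteq> P}"
definition XX where "XX R M N0 = {x \<in> FF R M N0. \<forall>z\<in>FF R M N0. z \<subseteq> x \<longrightarrow> z = x}"
definition perf where "perf R M X \<longleftrightarrow> (\<forall>x\<in>X. \<forall>K. fully_invariant R M K \<longrightarrow> \<not> K \<subseteq> x \<longrightarrow>
   (\<exists>y\<in>X. \<not> K \<subseteq> y \<and> (\<exists>L. fully_invariant R M L \<and> L \<subseteq> x \<and> \<not> L \<subseteq> y)))"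
definition Bad where "Bad R M N0 a b \<longleftrightarrow> fully_invariant R M a \<and> fully_invariant R M b \<and> a \<subseteq> b \<and>
   (\<exists>X. X \<subseteq> XX R M N0 \<and> X \<noteq> {} \<and> (\<forall>P\<in>X. a \<subseteq> P \<and> \<not> b \<subseteq> P) \<and> perf R M X)"

context lmodule begin

lemma LS_I: "submodule P R M \<Longrightarrow> P \<noteq> carrier M \<Longrightarrow>
  (\<And>N L. FI N \<Longrightarrow> FI L \<Longrightarrow> mprod R M N L \<subseteq> P \<Longrightarrow> N \<subseteq> P \<or> L \<subseteq> P) \<Longrightarrow> P \<in> LgSpec R M"
  by (simp add: LgSpec_def)

lemma XX_D: "x \<in> XX R M N0 \<Longrightarrow> x \<in> LgSpec R M \<and> N0 \<subseteq> x \<and> (\<forall>z\<in>FF R M N0. z \<subseteq> x \<longrightarrow> z = x)"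
  by (simp add: XX_def FF_def)

lemma key:
  assumes XX: "X \<subseteq> XX R M N0" and pf: "perf R M X" and N: "FI N" and ne: "\<exists>p\<in>X. \<not> N \<subseteq> p"
  shows "\<exists>N'. FI N' \<and> N' \<subseteq> N \<and> (\<exists>p\<in>X. \<not> N' \<subseteq> p) \<and>
     (\<exists>p\<in>X. \<not> N \<subseteq> p \<and> (\<exists>K. FI K \<and> \<not> K \<subseteq> p \<and> (\<forall>q\<in>X. \<not> N' \<subseteq> q \<longrightarrow> K \<subseteq> q)))" (is "\<exists>N'. ?P N'")
proof (rule ccontr)
  assume nt: "\<not> ?thesis"
  have H: "\<exists>q\<in>X. \<not> N' \<subseteq> q \<and> \<not> K \<subseteq> q"
    if h1: "FI N'" and h2: "N' \<subseteq> N" and h3: "\<exists>p\<in>X. \<not> N' \<subseteq> p" and h4: "p \<in> X" and h5: "\<not> N \<subseteq> p"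
      and h6: "FI K" and h7: "\<not> K \<subseteq> p" for N' p K
  proof (rule ccontr)
    assume c: "\<not> (\<exists>q\<in>X. \<not> N' \<subseteq> q \<and> \<not> K \<subseteq> q)"
    have "\<forall>q\<in>X. \<not> N' \<subseteq> q \<longrightarrow> K \<subseteq> q" using c by blast
    then have "\<exists>K. FI K \<and> \<not> K \<subseteq> p \<and> (\<forall>q\<in>X. \<not> N' \<subseteq> q \<longrightarrow> K \<subseteq> q)" using h6 h7 by blast
    then have "\<exists>p\<in>X. \<not> N \<subseteq> p \<and> (\<exists>K. FI K \<and> \<not> K \<subseteq> p \<and> (\<forall>q\<in>X. \<not> N' \<subseteq> q \<longrightarrow> K \<subseteq> q))"
      using h4 h5 by blast
    then have "?P N'" using h1 h2 h3 by blast
    then show False using nt by blast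
  qed
  define Y where "Y = {p \<in> X. \<not> N \<subseteq> p}"
  obtain p0 where p0: "p0 \<in> Y" using ne unfolding Y_def by blast
  have XD: "\<And>p. p \<in> X \<Longrightarrow> p \<in> LgSpec R M \<and> N0 \<subseteq> p \<and> (\<forall>z\<in>FF R M N0. z \<subseteq> p \<longrightarrow> z = p)"
    using XX XX_D by blast
  define g where "g = \<Inter>Y"
  have gsub: "submodule g R M" unfolding g_def
    apply (rule submod_Inter) using p0 apply blast
    using XD LS_D unfolding Y_def by blast
  have gp: "\<And>p. p \<in> Y \<Longrightarrow> g \<subseteq> p" unfolding g_def by blast
  have gne: "g \<noteq> carrier M"
  proof
    assume "g = carrier M"
    then have "carrier M \<subseteq> p0" using gp[OF p0] by simp
    moreover have "p0 \<subseteq> carrier M" "p0 \<noteq> carrier M" using LS_D XD p0 unfolding Y_def by blast+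
    ultimately show False by blast
  qed
  have gprime: "A \<subseteq> g \<or> B \<subseteq> g" if A: "FI A" and B: "FI B" and AB: "mprod R M A B \<subseteq> g" for A B
  proof (rule ccontr)
    assume "\<not> (A \<subseteq> g \<or> B \<subseteq> g)"
    then obtain P1 P2 where P1: "P1 \<in> Y" "\<not> A \<subseteq> P1" and P2: "P2 \<in> Y" "\<not> B \<subseteq> P2"
      unfolding g_def by blast
    have P1L: "P1 \<in> LgSpec R M" using P1 XD unfolding Y_def by blast
    have "\<not> N \<inter> A \<subseteq> P1" using prime_int[OF P1L N A] P1 unfolding Y_def by blast
    then have ex: "\<exists>p\<in>X. \<not> N \<inter> A \<subseteq> p" using P1 unfolding Y_def by blast
    from H[OF fi_Int[OF N A] _ ex _ _ B P2(2)] P2(1)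
    obtain q where q: "q \<in> X" "\<not> N \<inter> A \<subseteq> q" "\<not> B \<subseteq> q" unfolding Y_def by blast
    have "q \<in> Y" using q unfolding Y_def by blast
    then have "mprod R M A B \<subseteq> q" using AB gp by blast
    moreover have "q \<in> LgSpec R M" using XD q by blast
    ultimately have "A \<subseteq> q \<or> B \<subseteq> q" using LS_prime A B by blast
    then show False using q by blast
  qed
  have gL: "g \<in> LgSpec R M" using LS_I[OF gsub gne gprime] by blast
  have "N0 \<subseteq> g" unfolding g_def Y_def using XD by blast
  then have gF: "g \<in> FF R M N0" unfolding FF_def using gL by blast
  have Yg: "p = g" if pY: "p \<in> Y" for p
  proof -
    have "p \<in> X" using pY unfolding Y_def by blast
    then have "\<forall>z\<in>FF R M N0. z \<subseteq> p \<longrightarrow> z = p" using XD by blast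
    then show ?thesis using gF gp[OF pY] by blast
  qed
  have p0X: "p0 \<in> X" "\<not> N \<subseteq> p0" using p0 unfolding Y_def by blast+
  from pf p0X N obtain y L where y: "y \<in> X" "\<not> N \<subseteq> y" "FI L" "L \<subseteq> p0" "\<not> L \<subseteq> y"
    unfolding perf_def by blast
  have "y \<in> Y" using y unfolding Y_def by blast
  then have "y = g" "p0 = g" using Yg p0 by blast+
  then show False using y by blast
qed

end



context lmodule begin

lemma gen_sum_props:
  assumes A: "FI A" and B: "FI B"
  shows "A \<subseteq> gen_submodule R M (A \<union> B)" "B \<subseteq> gen_submodule R M (A \<union> B)"
    "\<And>H. submodule H R M \<Longrightarrow> A \<subseteq> H \<Longrightarrow> B \<subseteq> H \<Longrightarrow> gen_submodule R M (A \<union> B) \<subseteq> H"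
    "submodule (gen_submodule R M (A \<union> B)) R M"
proof -
  have U: "A \<union> B \<subseteq> carrier M" using submod_D(1)[OF fi_sub[OF A]] submod_D(1)[OF fi_sub[OF B]] by blast
  show "A \<subseteq> gen_submodule R M (A \<union> B)" "B \<subseteq> gen_submodule R M (A \<union> B)"
    using gen_props(2)[OF U] by blast+
  show "\<And>H. submodule H R M \<Longrightarrow> A \<subseteq> H \<Longrightarrow> B \<subseteq> H \<Longrightarrow> gen_submodule R M (A \<union> B) \<subseteq> H"
    using gen_props(3)[OF U] by blast
  show "submodule (gen_submodule R M (A \<union> B)) R M" using gen_props(1)[OF U] .
qed

lemma bad_chain:
  assumes bad: "Bad R M N0 a b"
  shows "a \<noteq> b \<and> (\<exists>x. (\<forall>i. submodule (x i) R M \<and> a \<subseteq> x i \<and> x i \<subseteq> b \<and> x (Suc i) \<subseteq> x i)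
           \<and> (\<forall>i. Bad R M N0 (x (Suc i)) (x i)))"
proof -
  from bad obtain X where a: "FI a" and b: "FI b" and ab: "a \<subseteq> b" and XX: "X \<subseteq> XX R M N0"
    and Xne: "X \<noteq> {}" and Xab: "\<And>P. P \<in> X \<Longrightarrow> a \<subseteq> P \<and> \<not> b \<subseteq> P" and pf: "perf R M X"
    unfolding Bad_def by blast
  have XL: "\<And>P. P \<in> X \<Longrightarrow> P \<in> LgSpec R M" using XX XX_D by blast
  have "a \<noteq> b" using Xne Xab by blast
  define Q where "Q = (\<lambda>N N'. FI N' \<and> N' \<subseteq> N \<and> (\<exists>p\<in>X. \<not> N' \<subseteq> p) \<and>
     (\<exists>p\<in>X. \<not> N \<subseteq> p \<and> (\<exists>K. FI K \<and> \<not> K \<subseteq> p \<and> (\<forall>q\<in>X. \<not> N' \<subseteq> q \<longrightarrow> K \<subseteq> q))))"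
  define step where "step = (\<lambda>N. SOME N'. Q N N')"
  define Ns where "Ns = rec_nat b (\<lambda>_ N. step N)"
  have Ns0: "Ns 0 = b" and NsS: "\<And>i. Ns (Suc i) = step (Ns i)" unfolding Ns_def by simp_all
  have stepQ: "Q N (step N)" if "FI N" "\<exists>p\<in>X. \<not> N \<subseteq> p" for N
  proof -
    have "\<exists>N'. Q N N'" unfolding Q_def using key[OF XX pf that] .
    then show ?thesis unfolding step_def by (rule someI_ex)
  qed
  have inv: "FI (Ns i) \<and> (\<exists>p\<in>X. \<not> Ns i \<subseteq> p)" for i
  proof (induction i)
    case 0
    then show ?case using Ns0 b Xne Xab by auto
  next
    case (Suc i)
    then show ?case using stepQ[of "Ns i"] NsS[of i] unfolding Q_def by auto
  qed
  have QS: "Q (Ns i) (Ns (Suc i))" for i using stepQ inv NsS by simp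
  define x where "x = (\<lambda>i. b \<inter> gen_submodule R M (a \<union> Ns i))"
  define Xi where "Xi = (\<lambda>i. {p \<in> X. \<not> Ns i \<subseteq> p \<and> (\<exists>K. FI K \<and> \<not> K \<subseteq> p \<and> (\<forall>q\<in>X. \<not> Ns (Suc i) \<subseteq> q \<longrightarrow> K \<subseteq> q))})"
  have fiNs: "FI (Ns i)" for i using inv by blast
  have fix_: "FI (x i)" for i unfolding x_def using fi_Int[OF b fi_sum[OF a fiNs]] .
  have chain: "submodule (x i) R M \<and> a \<subseteq> x i \<and> x i \<subseteq> b \<and> x (Suc i) \<subseteq> x i" for i
  proof -
    have "Ns (Suc i) \<subseteq> Ns i" using QS[of i] unfolding Q_def by blast
    then have "gen_submodule R M (a \<union> Ns (Suc i)) \<subseteq> gen_submodule R M (a \<union> Ns i)"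
      using gen_sum_props[OF a fiNs[of i]] gen_sum_props(3)[OF a fiNs[of "Suc i"]] by blast
    then have "x (Suc i) \<subseteq> x i" unfolding x_def by blast
    moreover have "a \<subseteq> x i" using ab gen_sum_props(1)[OF a fiNs[of i]] unfolding x_def by blast
    moreover have "x i \<subseteq> b" unfolding x_def by blast
    ultimately show ?thesis using fi_sub[OF fix_[of i]] by blast
  qed
  have badi: "Bad R M N0 (x (Suc i)) (x i)" for i
  proof -
    have Xi_sub: "Xi i \<subseteq> XX R M N0" using XX unfolding Xi_def by blast
    have Xi_ne: "Xi i \<noteq> {}" using QS[of i] unfolding Q_def Xi_def by blast
    have Xi_ab: "x (Suc i) \<subseteq> P \<and> \<not> x i \<subseteq> P" if P: "P \<in> Xi i" for P
    proof -
      have PX: "P \<in> X" and nN: "\<not> Ns i \<subseteq> P" and K: "\<exists>K. FI K \<and> \<not> K \<subseteq> P \<and> (\<forall>q\<in>X. \<not> Ns (Suc i) \<subseteq> q \<longrightarrow> K \<subseteq> q)"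
        using P unfolding Xi_def by blast+
      have "Ns (Suc i) \<subseteq> P" using K PX by blast
      moreover have "a \<subseteq> P" using Xab[OF PX] by blast
      moreover have PL: "P \<in> LgSpec R M" using XL[OF PX] .
      ultimately have "gen_submodule R M (a \<union> Ns (Suc i)) \<subseteq> P"
        using gen_sum_props(3)[OF a fiNs[of "Suc i"]] LS_D by blast
      then have 1: "x (Suc i) \<subseteq> P" unfolding x_def by blast
      have "\<not> gen_submodule R M (a \<union> Ns i) \<subseteq> P" using nN gen_sum_props(2)[OF a fiNs[of i]] by blast
      then have "\<not> b \<inter> gen_submodule R M (a \<union> Ns i) \<subseteq> P"
        using prime_int[OF PL b fi_sum[OF a fiNs[of i]]] Xab[OF PX] by blast
      then show ?thesis using 1 unfolding x_def by blast
    qed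
    have Xi_pf: "perf R M (Xi i)"
      unfolding perf_def
    proof (intro ballI allI impI)
      fix p K assume p: "p \<in> Xi i" and K: "FI K" "\<not> K \<subseteq> p"
      have pX: "p \<in> X" and nN: "\<not> Ns i \<subseteq> p" using p unfolding Xi_def by blast+
      obtain K1 where K1: "FI K1" "\<not> K1 \<subseteq> p" "\<forall>q\<in>X. \<not> Ns (Suc i) \<subseteq> q \<longrightarrow> K1 \<subseteq> q"
        using p unfolding Xi_def by blast
      have pL: "p \<in> LgSpec R M" using XL[OF pX] .
      have f1: "FI (Ns i \<inter> K1)" using fi_Int[OF fiNs K1(1)] .
      have n1: "\<not> Ns i \<inter> K1 \<subseteq> p" using prime_int[OF pL fiNs K1(1)] nN K1(2) by blast
      have f2: "FI (K \<inter> (Ns i \<inter> K1))" using fi_Int[OF K(1) f1] .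
      have n2: "\<not> K \<inter> (Ns i \<inter> K1) \<subseteq> p" using prime_int[OF pL K(1) f1] K(2) n1 by blast
      from pf pX f2 n2 obtain y L where y: "y \<in> X" "\<not> K \<inter> (Ns i \<inter> K1) \<subseteq> y" "FI L" "L \<subseteq> p" "\<not> L \<subseteq> y"
        unfolding perf_def by blast
      have "y \<in> Xi i" unfolding Xi_def using y(1,2) K1(1,3) by blast
      then show "\<exists>y\<in>Xi i. \<not> K \<subseteq> y \<and> (\<exists>L. FI L \<and> L \<subseteq> p \<and> \<not> L \<subseteq> y)"
        using y by blast
    qed
    have "\<forall>P\<in>Xi i. x (Suc i) \<subseteq> P \<and> \<not> x i \<subseteq> P" using Xi_ab by blast
    then have "\<exists>X. X \<subseteq> XX R M N0 \<and> X \<noteq> {} \<and> (\<forall>P\<in>X. x (Suc i) \<subseteq> P \<and> \<not> x i \<subseteq> P) \<and> perf R M X"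
      using Xi_sub Xi_ne Xi_pf by blast
    moreover have "x (Suc i) \<subseteq> x i" using chain by blast
    ultimately show ?thesis unfolding Bad_def using fix_[of i] fix_[of "Suc i"] by blast
  qed
  show ?thesis using \<open>a \<noteq> b\<close> chain badi by blast
qed

end



context lmodule begin

lemma zorn_min:
  assumes y: "y \<in> FF R M N0"
  shows "\<exists>m\<in>XX R M N0. m \<subseteq> y"
proof -
  let ?A = "{P \<in> FF R M N0. P \<subseteq> y}"
  have lb: "\<Inter>C \<in> ?A" if C: "C \<subseteq> ?A" "C \<noteq> {}" "\<forall>P\<in>C. \<forall>Q\<in>C. P \<subseteq> Q \<or> Q \<subseteq> P" for C
  proof -
    have CL: "\<And>P. P \<in> C \<Longrightarrow> P \<in> LgSpec R M \<and> N0 \<subseteq> P \<and> P \<subseteq> y" using C(1) unfolding FF_def by blast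
    obtain P0 where P0: "P0 \<in> C" using C(2) by blast
    have gsub: "submodule (\<Inter>C) R M" apply (rule submod_Inter[OF C(2)]) using CL LS_D by blast
    have gne: "\<Inter>C \<noteq> carrier M"
    proof
      assume "\<Inter>C = carrier M"
      then have "carrier M \<subseteq> P0" using P0 by blast
      moreover have "P0 \<subseteq> carrier M" "P0 \<noteq> carrier M" using LS_D CL[OF P0] by blast+
      ultimately show False by blast
    qed
    have gprime: "A \<subseteq> \<Inter>C \<or> B \<subseteq> \<Inter>C" if A: "FI A" and B: "FI B" and AB: "mprod R M A B \<subseteq> \<Inter>C" for A B
    proof (rule ccontr)
      assume "\<not> (A \<subseteq> \<Inter>C \<or> B \<subseteq> \<Inter>C)"
      then obtain P1 P2 where P1: "P1 \<in> C" "\<not> A \<subseteq> P1" and P2: "P2 \<in> C" "\<not> B \<subseteq> P2" by blast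
      have "mprod R M A B \<subseteq> P1" "mprod R M A B \<subseteq> P2" using AB P1 P2 by blast+
      then have "A \<subseteq> P1 \<or> B \<subseteq> P1" "A \<subseteq> P2 \<or> B \<subseteq> P2" using LS_prime A B CL P1(1) P2(1) by blast+
      moreover have "P1 \<subseteq> P2 \<or> P2 \<subseteq> P1" using C(3) P1(1) P2(1) by blast
      ultimately show False using P1 P2 by blast
    qed
    have "\<Inter>C \<in> LgSpec R M" using LS_I[OF gsub gne gprime] by blast
    moreover have "N0 \<subseteq> \<Inter>C" "\<Inter>C \<subseteq> y" using CL P0 by blast+
    ultimately show ?thesis unfolding FF_def by blast
  qed
  have "\<exists>Mx\<in>uminus ` ?A. \<forall>Z\<in>uminus ` ?A. Mx \<subseteq> Z \<longrightarrow> Z = Mx"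
  proof (rule subset_Zorn)
    fix C assume ch: "subset.chain (uminus ` ?A) C"
    then have Csub: "C \<subseteq> uminus ` ?A" and Cch: "\<forall>X\<in>C. \<forall>Y\<in>C. X \<subseteq> Y \<or> Y \<subseteq> X"
      unfolding subset_chain_def by blast+
    show "\<exists>U\<in>uminus ` ?A. \<forall>X\<in>C. X \<subseteq> U"
    proof (cases "C = {}")
      case True
      have "- y \<in> uminus ` ?A" using y by blast
      then show ?thesis using True by blast
    next
      case False
      let ?C' = "uminus ` C"
      have C'sub: "?C' \<subseteq> ?A" using Csub by auto
      have C'ne: "?C' \<noteq> {}" using False by blast
      have C'ch: "\<forall>P\<in>?C'. \<forall>Q\<in>?C'. P \<subseteq> Q \<or> Q \<subseteq> P" using Cch by auto
      have gA: "\<Inter>?C' \<in> ?A" using lb[OF C'sub C'ne C'ch] .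
      have "\<forall>X\<in>C. X \<subseteq> - \<Inter>?C'" by auto
      then show ?thesis using gA by blast
    qed
  qed
  then obtain Mx where Mx: "Mx \<in> uminus ` ?A" and mx0: "\<forall>Z\<in>uminus ` ?A. Mx \<subseteq> Z \<longrightarrow> Z = Mx"
    by (rule bexE)
  have mx: "Z = Mx" if "Z \<in> uminus ` ?A" "Mx \<subseteq> Z" for Z using bspec[OF mx0 that(1)] that(2) by (rule mp)
  define m where "m = - Mx"
  from Mx obtain P0 where P0: "P0 \<in> ?A" "Mx = - P0" by (rule imageE)
  have mA: "m \<in> ?A" using P0 unfolding m_def by simp
  have Mxm: "Mx = - m" unfolding m_def by simp
  have "m \<in> XX R M N0" unfolding XX_def
  proof (intro CollectI conjI ballI impI)
    show "m \<in> FF R M N0" using mA by blast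
    fix z assume z: "z \<in> FF R M N0" "z \<subseteq> m"
    have "z \<subseteq> y" using z(2) mA by blast
    then have "z \<in> ?A" using z(1) by blast
    then have "-z \<in> uminus ` ?A" by (rule imageI)
    moreover have "Mx \<subseteq> -z" using z(2) unfolding Mxm by blast
    ultimately have "-z = Mx" by (rule mx)
    then show "z = m" unfolding Mxm by simp
  qed
  then show ?thesis using mA by blast
qed

lemma main:
  assumes hd: "has_dev R M {\<zero>\<^bsub>M\<^esub>} (carrier M)"
  shows "weakly_scattered (LgSpec_top R M)"
  unfolding weakly_scattered_def
proof (intro allI impI)
  fix F assume F: "closedin (LgSpec_top R M) F \<and> F \<noteq> {}"
  show "\<exists>x\<in>F. \<exists>U. openin (LgSpec_top R M) U \<and> x \<in> U \<and> U \<inter> F \<subseteq> LgSpec_top R M closure_of {x}"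
  proof (rule ccontr)
    assume nf: "\<not> ?thesis"
    have FL: "F \<subseteq> LgSpec R M" and oF: "openin (LgSpec_top R M) (LgSpec R M - F)"
      using F unfolding closedin_def topspace_LS by blast+
    obtain N0 where N0: "FI N0" "LgSpec R M - F = Dset R M N0" using oF openin_LS by blast
    have FF: "F = FF R M N0"
    proof
      show "F \<subseteq> FF R M N0"
      proof
        fix P assume "P \<in> F"
        then have "P \<in> LgSpec R M" "P \<notin> Dset R M N0" using FL N0(2) by blast+
        then show "P \<in> FF R M N0" unfolding FF_def Dset_def by blast
      qed
      show "FF R M N0 \<subseteq> F"
      proof
        fix P assume "P \<in> FF R M N0"
        then have "P \<in> LgSpec R M" "P \<notin> Dset R M N0" unfolding FF_def Dset_def by blast+
        then show "P \<in> F" using N0(2) by blast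
      qed
    qed
    have XF: "XX R M N0 \<subseteq> F" unfolding FF XX_def by blast
    have pf: "perf R M (XX R M N0)" unfolding perf_def
    proof (intro ballI allI impI)
      fix x K assume x: "x \<in> XX R M N0" and K: "FI K" "\<not> K \<subseteq> x"
      have xF: "x \<in> F" using x XF by blast
      have xL: "x \<in> LgSpec R M" using xF FL by blast
      have op: "openin (LgSpec_top R M) (Dset R M K)" using openin_LS K(1) by blast
      have xD: "x \<in> Dset R M K" using xL K(2) unfolding Dset_def by blast
      have "\<not> Dset R M K \<inter> F \<subseteq> LgSpec_top R M closure_of {x}" using nf xF op xD by blast
      then obtain y' where y': "y' \<in> Dset R M K" "y' \<in> F" "y' \<notin> LgSpec_top R M closure_of {x}" by blast
      have y'L: "y' \<in> LgSpec R M" using y'(2) FL by blast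
      obtain L where L: "FI L" "\<not> L \<subseteq> y'" "L \<subseteq> x"
        using y'(3) y'L unfolding closure_LS[OF xL] by blast
      obtain m where m: "m \<in> XX R M N0" "m \<subseteq> y'" using zorn_min y'(2) FF by blast
      have "\<not> K \<subseteq> m" using y'(1) m(2) unfolding Dset_def by blast
      moreover have "\<not> L \<subseteq> m" using L(2) m(2) by blast
      ultimately show "\<exists>y\<in>XX R M N0. \<not> K \<subseteq> y \<and> (\<exists>L. FI L \<and> L \<subseteq> x \<and> \<not> L \<subseteq> y)"
        using m(1) L(1,3) by blast
    qed
    obtain x0 where "x0 \<in> F" using F by blast
    then obtain m0 where m0: "m0 \<in> XX R M N0" using zorn_min FF by blast
    have m0D: "\<And>P. P \<in> XX R M N0 \<Longrightarrow> {\<zero>\<^bsub>M\<^esub>} \<subseteq> P \<and> \<not> carrier M \<subseteq> P"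
    proof -
      fix P assume "P \<in> XX R M N0"
      then have "P \<in> LgSpec R M" using XX_D by blast
      then have "submodule P R M" "P \<subseteq> carrier M" "P \<noteq> carrier M" using LS_D by blast+
      then show "{\<zero>\<^bsub>M\<^esub>} \<subseteq> P \<and> \<not> carrier M \<subseteq> P" using submod_D(2) by blast
    qed
    have "\<exists>X. X \<subseteq> XX R M N0 \<and> X \<noteq> {} \<and> (\<forall>P\<in>X. {\<zero>\<^bsub>M\<^esub>} \<subseteq> P \<and> \<not> carrier M \<subseteq> P) \<and> perf R M X"
      using m0 m0D pf by blast
    moreover have "{\<zero>\<^bsub>M\<^esub>} \<subseteq> carrier M" by simp
    ultimately have bad: "Bad R M N0 {\<zero>\<^bsub>M\<^esub>} (carrier M)" unfolding Bad_def using fi_zero fi_carrier by blast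
    have "\<not> Bad R M N0 {\<zero>\<^bsub>M\<^esub>} (carrier M)"
      by (rule dev_no_bad[OF hd, of "Bad R M N0"]) (rule bad_chain)
    then show False using bad by blast
  qed
qed

end

theorem corollary4p34:
  fixes R :: "'r ring" and M :: "('r, 'a) module"
  assumes "lmodule R M"
    and "projective_in_sigma R M"
    and "has_krull_dim R M"
  shows "weakly_scattered (LgSpec_top R M)"
  using lmodule.main[OF assms(1)] assms(3) unfolding has_krull_dim_def by blast


end
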